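(* Let $\gamma$ be an oval parameterized by arc length, $s\mapsto\gamma(s)$, with curvature function $k(s)>0$. Consider pairs of parameters $(x,x')$ such that the tangent lines to $\gamma$ at $\gamma(x)$ and $\gamma(x')$ meet at a point $A$ of the exterior of $\gamma$ with $\gamma(x)=x_-(A)$ and $\gamma(x')=x_+(A)$. Let $\varphi\in(0,\pi)$ be the angle at $A$ between the tangent segments $A\gamma(x)$ and $A\gamma(x')$. Define $$H(x,x')=|\gamma(x)A|+|A\gamma(x')|.$$ Then $$\frac{\partial H}{\partial x}=-k(x)\,|A\gamma(x)|\cot\frac{\varphi}{2}-1,\qquad \frac{\partial H}{\partial x'}=k(x')\,|A\gamma(x')|\cot\frac{\varphi}{2}+1,$$ and $$\frac{\partial^2 H}{\partial x\,\partial x'}=-\frac{k(x)k(x')\big(|A\gamma(x)|+|A\gamma(x')|\big)}{2\sin^2\frac{\varphi}{2}}.$$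
   Context: An oval is a smooth closed simple planar curve $\gamma$ with everywhere positive curvature; it bounds a compact strictly convex domain $K$. Orient $\gamma$ counterclockwise, and let the arc length parameter increase along this orientation. For a point $A\in\mathbb{R}^2\setminus K$ there are exactly two lines through $A$ tangent to $\gamma$. The positive tangency point $x_+(A)$ is the one for which $x_+(A)-A$ is a positive multiple of the oriented tangent vector of $\gamma$ at $x_+(A)$. The negative tangency point $x_-(A)$ is the one for which $A-x_-(A)$ is a positive multiple of the oriented tangent vector of $\gamma$ at $x_-(A)$. *)

theory Defs
  imports "HOL-Analysis.Analysis"
begin

definition vderiv :: "(real \<Rightarrow> real^2) \<Rightarrow> real \<Rightarrow> real^2" where
  "vderiv f t = vector_derivative f (at t)"

definition smooth_curve :: "(real \<Rightarrow> real^2) \<Rightarrow> bool" where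
  "smooth_curve \<gamma> \<longleftrightarrow> (\<forall>n t. (vderiv ^^ n) \<gamma> differentiable (at t))"

text \<open>Oriented unit tangent (for an arc length parametrization) and signed curvature
  det(gamma', gamma''), positive w.r.t. the left normal.\<close>
definition tangent :: "(real \<Rightarrow> real^2) \<Rightarrow> real \<Rightarrow> real^2" where
  "tangent \<gamma> s = vderiv \<gamma> s"

definition curvature :: "(real \<Rightarrow> real^2) \<Rightarrow> real \<Rightarrow> real" where
  "curvature \<gamma> s =
     (let u = vderiv \<gamma> s; v = vderiv (vderiv \<gamma>) s in u$1 * v$2 - u$2 * v$1)"

text \<open>An oval parametrized by arc length, of total length L: smooth, L-periodic,
  simple (injective on one period), unit speed, positive signed curvature
  (positive curvature w.r.t. the left normal = counterclockwise orientation).\<close>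
definition arclength_oval :: "(real \<Rightarrow> real^2) \<Rightarrow> real \<Rightarrow> bool" where
  "arclength_oval \<gamma> L \<longleftrightarrow>
     L > 0 \<and> smooth_curve \<gamma> \<and> (\<forall>s. \<gamma> (s + L) = \<gamma> s) \<and> inj_on \<gamma> {0..<L} \<and>
     (\<forall>s. norm (tangent \<gamma> s) = 1) \<and> (\<forall>s. curvature \<gamma> s > 0)"

definition oval_domain :: "(real \<Rightarrow> real^2) \<Rightarrow> (real^2) set" where
  "oval_domain \<gamma> = range \<gamma> \<union> inside (range \<gamma>)"

text \<open>gamma(s) is the negative tangency point x_-(A): A - gamma(s) is a positive
  multiple of the oriented tangent at gamma(s).\<close>
definition is_neg_tangency :: "(real \<Rightarrow> real^2) \<Rightarrow> real^2 \<Rightarrow> real \<Rightarrow> bool" where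
  "is_neg_tangency \<gamma> A s \<longleftrightarrow> (\<exists>c>0. A - \<gamma> s = c *\<^sub>R tangent \<gamma> s)"

text \<open>gamma(s) is the positive tangency point x_+(A): gamma(s) - A is a positive
  multiple of the oriented tangent at gamma(s).\<close>
definition is_pos_tangency :: "(real \<Rightarrow> real^2) \<Rightarrow> real^2 \<Rightarrow> real \<Rightarrow> bool" where
  "is_pos_tangency \<gamma> A s \<longleftrightarrow> (\<exists>c>0. \<gamma> s - A = c *\<^sub>R tangent \<gamma> s)"

definition tangent_meet :: "(real \<Rightarrow> real^2) \<Rightarrow> real \<Rightarrow> real \<Rightarrow> real^2" where
  "tangent_meet \<gamma> x x' =
     (THE A. (\<exists>a. A = \<gamma> x + a *\<^sub>R tangent \<gamma> x) \<and> (\<exists>b. A = \<gamma> x' + b *\<^sub>R tangent \<gamma> x'))"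

definition H :: "(real \<Rightarrow> real^2) \<Rightarrow> real \<Rightarrow> real \<Rightarrow> real" where
  "H \<gamma> x x' = dist (\<gamma> x) (tangent_meet \<gamma> x x') + dist (tangent_meet \<gamma> x x') (\<gamma> x')"

definition vangle :: "real^2 \<Rightarrow> real^2 \<Rightarrow> real" where
  "vangle u v = arccos ((u \<bullet> v) / (norm u * norm v))"

end

theory Submission imports Defs begin

lemma n2: "norm (v::real^2) = sqrt ((v$1)^2 + (v$2)^2)"
  by (simp add: norm_eq_sqrt_inner inner_vec_def UNIV_2 power2_eq_square)
lemma i2: "(v::real^2) \<bullet> w = v$1*w$1 + v$2*w$2"
  by (simp add: inner_vec_def UNIV_2)
lemma veq: "((v::real^2) = w) = (v$1 = w$1 \<and> v$2 = w$2)"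
  by (simp add: vec_eq_iff forall_2)
lemma comp_der:
  assumes "(f has_vector_derivative (v::real^2)) F"
  shows "((\<lambda>s. f s $ i) has_real_derivative v $ i) F"
  using bounded_linear.has_vector_derivative[OF bounded_linear_vec_nth assms]
  by (simp add: has_real_derivative_iff_has_vector_derivative)

lemma periodic_vderiv:
  assumes per: "\<And>s. f (s + L) = f s" and d: "\<And>s. f differentiable (at s)"
  shows "vderiv f (s + L) = vderiv f s"
proof -
  have "(f has_vector_derivative vderiv f (s+L)) (at (s+L))"
    using d vector_derivative_works unfolding vderiv_def by blast
  then have "((f \<circ> (\<lambda>u. u + L)) has_vector_derivative (1::real) *\<^sub>R vderiv f (s+L)) (at s)"
    by (intro vector_diff_chain_at) (auto intro!: derivative_eq_intros)
  moreover have "f \<circ> (\<lambda>u. u + L) = f" using per by auto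
  ultimately show ?thesis unfolding vderiv_def by (simp add: vector_derivative_at)
qed

lemma periodic_int:
  fixes L :: real
  assumes per: "\<And>s. f (s + L) = f s"
  shows "f (s + of_int n * L) = f s"
proof -
  have nat: "f (s + real m * L) = f s" for s m
  proof (induction m arbitrary: s)
    case 0 then show ?case by simp
  next
    case (Suc m)
    have "f (s + real (Suc m) * L) = f ((s + real m * L) + L)" by (simp add: algebra_simps)
    also have "\<dots> = f s" using per Suc by simp
    finally show ?case .
  qed
  show ?thesis
  proof (cases "n \<ge> 0")
    case True then show ?thesis using nat[of s "nat n"] by simp
  next
    case False
    have "f (s + of_int n * L + real (nat (-n)) * L) = f (s + of_int n * L)" by (rule nat)
    moreover have "s + of_int n * L + real (nat (-n)) * L = s" using False by (simp add: algebra_simps)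
    ultimately show ?thesis by simp
  qed
qed

lemma rot_norm: "((a::real)*c + b* s)^2 + (b*c - a* s)^2 = (a^2+b^2)*(s^2+c^2)"
  by (simp add: power2_eq_square algebra_simps)
lemma rot_inv1: "((a::real)*c + b* s)*c - (b*c - a* s)* s = a*(s^2+c^2)"
  by (simp add: power2_eq_square algebra_simps)
lemma rot_inv2: "((a::real)*c + b* s)* s + (b*c - a* s)*c = b*(s^2+c^2)"
  by (simp add: power2_eq_square algebra_simps)

lemma scale_bound:
  fixes V :: "'a::real_normed_vector"
  assumes "norm V \<le> c * \<bar>a\<bar>" "a \<noteq> 0"
  shows "norm ((1 / a) *\<^sub>R V) \<le> c"
proof -
  have "norm ((1 / a) *\<^sub>R V) = norm V / \<bar>a\<bar>" by simp
  also have "\<dots> \<le> c" using assms by (simp add: divide_le_eq)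
  finally show ?thesis .
qed

lemma scale_sub:
  fixes X :: "'a::real_normed_vector"
  assumes "a \<noteq> 0"
  shows "(1 / a) *\<^sub>R (X - a *\<^sub>R v) = (1 / a) *\<^sub>R X - v"
  using assms by (simp add: scaleR_diff_right)


lemma exp_lift_const:
  fixes g h :: "'a::topological_space \<Rightarrow> complex"
  assumes S: "connected S" and cg: "continuous_on S g" and ch: "continuous_on S h"
    and e: "\<And>x. x \<in> S \<Longrightarrow> exp (g x) = exp (h x)" and x: "x \<in> S" and y: "y \<in> S"
  shows "g x - h x = g y - h y"
proof -
  have int: "\<exists>n::int. Re (g z - h z) = 0 \<and> Im (g z - h z) = of_int (2 * n) * pi" if "z \<in> S" for z
  proof -
    have "exp (g z - h z) = 1" using e[OF that] by (simp add: exp_diff)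
    then show ?thesis using exp_eq_1 by blast
  qed
  have "(\<lambda>z. g z - h z) constant_on S"
  proof (rule continuous_discrete_range_constant[OF S])
    show "continuous_on S (\<lambda>z. g z - h z)" using cg ch by (intro continuous_intros)
    fix z assume z: "z \<in> S"
    show "\<exists>e>0. \<forall>w. w \<in> S \<and> g w - h w \<noteq> g z - h z \<longrightarrow> e \<le> cmod (g w - h w - (g z - h z))"
    proof (intro exI[of _ "2*pi"] conjI allI impI)
      fix w assume w: "w \<in> S \<and> g w - h w \<noteq> g z - h z"
      obtain n where n: "Re (g z - h z) = 0" "Im (g z - h z) = of_int (2 * n) * pi" using int[OF z] by blast
      obtain m where m: "Re (g w - h w) = 0" "Im (g w - h w) = of_int (2 * m) * pi" using int w by blast
      have "m \<noteq> n" using n m w by (auto simp: complex_eq_iff)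
      then have "1 \<le> \<bar>of_int m - of_int n :: real\<bar>" by (metis of_int_1_le_iff of_int_abs of_int_diff zabs_less_one_iff zero_less_abs_iff le_less eq_iff_diff_eq_0 linorder_not_less)
      then have "2*pi \<le> 2*pi * \<bar>of_int m - of_int n :: real\<bar>" by simp
      also have "\<dots> = \<bar>Im (g w - h w - (g z - h z))\<bar>"
      proof -
        have "Im (g w - h w - (g z - h z)) = 2*pi*(of_int m - of_int n)" using n m by (simp add: algebra_simps)
        then show ?thesis by (simp add: abs_mult)
      qed
      also have "\<dots> \<le> cmod (g w - h w - (g z - h z))" by (rule abs_Im_le_cmod)
      finally show "2*pi \<le> cmod (g w - h w - (g z - h z))" .
    qed simp
  qed
  then show ?thesis using x y unfolding constant_on_def by force
qed

lemma edge_up: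
  fixes F g :: "real \<Rightarrow> complex"
  assumes ab: "a \<le> b" and cg: "continuous_on {a..b} g" and cF: "continuous_on {a..b} F"
    and e: "\<And>t. t \<in> {a..b} \<Longrightarrow> F t = exp (g t)"
    and up: "\<And>t. t \<in> {a..b} \<Longrightarrow> Im (F t) \<ge> 0"
    and n1: "\<And>t. t \<in> {a..b} \<Longrightarrow> norm (F t) = 1"
  shows "g b - g a = \<i> * of_real (Arg2pi (F b) - Arg2pi (F a))"
proof -
  define h where "h t = \<i> * of_real (Arg2pi (F t))" for t
  have "continuous_on {a..b} (\<lambda>t. Arg2pi (F t))"
    by (rule continuous_on_compose2[OF continuous_on_upperhalf_Arg2pi cF]) (use up n1 in force)
  then have ch: "continuous_on {a..b} h" unfolding h_def by (intro continuous_intros)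
  have eh: "exp (g t) = exp (h t)" if "t \<in> {a..b}" for t
  proof -
    have "is_Arg (F t) (Arg2pi (F t))" using Arg2pi by blast
    then have "F t = exp (h t)" using n1[OF that] unfolding is_Arg_def h_def by simp
    then show ?thesis using e[OF that] by simp
  qed
  have "g b - h b = g a - h a"
    by (rule exp_lift_const[OF _ cg ch eh]) (use ab in auto)
  then show ?thesis unfolding h_def by (simp add: algebra_simps)
qed

definition cpx :: "real^2 \<Rightarrow> complex" where "cpx v = Complex (v$1) (v$2)"

lemma cpx_alt: "cpx v = of_real (v$1) + \<i> * of_real (v$2)"
  by (simp add: cpx_def complex_eq_iff)
lemma cont_cpx [continuous_intros]: "continuous F f \<Longrightarrow> continuous F (\<lambda>x. cpx (f x))"
  unfolding cpx_alt by (intro continuous_intros)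
lemma cont_on_cpx [continuous_intros]: "continuous_on S f \<Longrightarrow> continuous_on S (\<lambda>x. cpx (f x))"
  unfolding cpx_alt by (intro continuous_intros)
lemma cpx_scale: "cpx (c *\<^sub>R v) = of_real c * cpx v" by (simp add: cpx_def complex_eq_iff)
lemma cpx_diff: "cpx (u - v) = cpx u - cpx v" by (simp add: cpx_def complex_eq_iff)
lemma cpx_norm: "cmod (cpx v) = norm v" by (simp add: cpx_def n2 cmod_def)
lemma cpx_0: "cpx v = 0 \<longleftrightarrow> v = 0" by (simp add: cpx_def complex_eq_iff veq)
lemma Im_cpx [simp]: "Im (cpx v) = v$2" by (simp add: cpx_def)
lemma Re_cpx [simp]: "Re (cpx v) = v$1" by (simp add: cpx_def)
lemma sgn_pos_scale: "c > 0 \<Longrightarrow> sgn (of_real c * (z::complex)) = sgn z"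
  by (simp add: sgn_mult sgn_of_real)


lemma cramer_id: "((p1::real)*d1+p2*d2)*(p1*q2-p2*q1) = (d1*q2-d2*q1)*(p1^2+p2^2) + (p1*d2-p2*d1)*(p1*q1+p2*q2)"
  by (simp add: algebra_simps power2_eq_square)

lemma alg_s:
  fixes p1 p2 q1 q2 d1 d2 k :: real
  assumes D: "D = p1*q2 - p2*q1" "D \<noteq> 0" and u: "p1^2+p2^2 = 1"
    and N: "N = d1*q2 - d2*q1" and M: "M = p1*d2 - p2*d1" and c: "c = p1*q1 + p2*q2"
  shows "((-D) * D - N * (-k*c)) / (D*D) + ((-k*(p1*d1+p2*d2)) * D - M * (-k*c)) / (D*D)
       = -1 + k * ((N/D) * (c - 1) / D)"
proof -
  have pd: "(p1*d1+p2*d2)*D = N + M*c" using cramer_id[of p1 d1 p2 d2 q2 q1] u D N M c by simp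
  have "((-D) * D - N * (-k*c)) / (D*D) + ((-k*(p1*d1+p2*d2)) * D - M * (-k*c)) / (D*D)
      = (-(D*D) + N*k*c - k*((p1*d1+p2*d2)*D) + M*k*c) / (D*D)"
    by (simp add: add_divide_distrib[symmetric] algebra_simps)
  also have "\<dots> = (-(D*D) + N*k*(c-1)) / (D*D)" using pd by (simp add: algebra_simps)
  also have "\<dots> = -1 + k * ((N/D) * (c - 1) / D)" using D(2) by (simp add: field_simps)
  finally show ?thesis .
qed

lemma alg_t:
  fixes p1 p2 q1 q2 d1 d2 k :: real
  assumes D: "D = p1*q2 - p2*q1" "D \<noteq> 0" and u: "q1^2+q2^2 = 1"
    and N: "N = d1*q2 - d2*q1" and M: "M = p1*d2 - p2*d1" and c: "c = p1*q1 + p2*q2"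
  shows "((k*(d1*q1+d2*q2)) * D - N * (k*c)) / (D*D) + (D * D - M * (k*c)) / (D*D)
       = 1 + k * ((M/D) * (1 - c) / D)"
proof -
  have pd: "(d1*q1+d2*q2)*D = N*c + M"
  proof -
    have "(d1*q1+d2*q2)*(p1*q2-p2*q1) = (d1*q2-d2*q1)*(p1*q1+p2*q2) + (p1*d2-p2*d1)*(q1^2+q2^2)"
      by (simp add: algebra_simps power2_eq_square)
    then show ?thesis using u D N M c by simp
  qed
  have "((k*(d1*q1+d2*q2)) * D - N * (k*c)) / (D*D) + (D * D - M * (k*c)) / (D*D)
      = (k*((d1*q1+d2*q2)*D) - N*k*c + D*D - M*k*c) / (D*D)"
    by (simp add: add_divide_distrib[symmetric] algebra_simps)
  also have "\<dots> = (D*D + k*M*(1 - c)) / (D*D)" using pd by (simp add: algebra_simps)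
  also have "\<dots> = 1 + k * ((M/D) * (1 - c) / D)" using D(2) by (simp add: field_simps)
  finally show ?thesis .
qed

lemma alg_mixed:
  fixes a b c D k k' :: real
  assumes D: "D \<noteq> 0" and dc: "D^2 + c^2 = 1" and c1: "1 + c \<noteq> 0"
  shows "k * ((((k' * b / D) * (c - 1) + a * (- k' * D)) * D - a * (c - 1) * (k' * c)) / (D * D))
       = - (k * k' * (a + b)) / (1 + c)"
proof -
  have "((k' * b / D) * (c - 1) + a * (- k' * D)) * D - a * (c - 1) * (k' * c)
      = k' * b * (c - 1) - a * k' * (D*D) - a * (c-1) * k' * c"
    using D by (simp add: field_simps)
  also have "\<dots> = k' * (a + b) * (c - 1)"
  proof -
    have h: "D*D = 1 - c*c" using dc by (simp add: power2_eq_square algebra_simps)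
    show ?thesis by (simp add: h algebra_simps)
  qed
  finally have e: "((k' * b / D) * (c - 1) + a * (- k' * D)) * D - a * (c - 1) * (k' * c) = k' * (a + b) * (c - 1)" .
  have DD: "D * D = (1 - c) * (1 + c)" using dc by (simp add: algebra_simps power2_eq_square)
  have c1': "1 - c \<noteq> 0" using D DD by auto
  have q: "(c - 1) / ((1 - c) * (1 + c)) = -1/(1+c)"
  proof -
    have nz: "(1 - c) * (1 + c) \<noteq> 0" using c1 c1' by simp
    show ?thesis unfolding frac_eq_eq[OF nz c1] by (simp add: algebra_simps)
  qed
  have "k * (k' * (a + b) * (c - 1)) / ((1 - c) * (1 + c)) = k * k' * (a + b) * ((c - 1) / ((1 - c) * (1 + c)))"
    by simp
  also have "\<dots> = - (k * k' * (a + b)) / (1 + c)" unfolding q by simp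
  finally show ?thesis unfolding e DD by simp
qed
lemma alg_at:
  fixes p1 p2 q1 q2 d1 d2 k :: real
  assumes D: "D = p1*q2 - p2*q1" "D \<noteq> 0" and u: "q1^2+q2^2 = 1"
    and N: "N = d1*q2 - d2*q1" and M: "M = p1*d2 - p2*d1" and c: "c = p1*q1 + p2*q2"
  shows "((k*(d1*q1+d2*q2)) * D - N * (k*c)) / (D*D) = k * (M/D) / D"
proof -
  have pd: "(d1*q1+d2*q2)*D = N*c + M"
  proof -
    have "(d1*q1+d2*q2)*(p1*q2-p2*q1) = (d1*q2-d2*q1)*(p1*q1+p2*q2) + (p1*d2-p2*d1)*(q1^2+q2^2)"
      by (simp add: algebra_simps power2_eq_square)
    then show ?thesis using u D N M c by simp
  qed
  have "((k*(d1*q1+d2*q2)) * D - N * (k*c)) / (D*D) = (k*((d1*q1+d2*q2)*D) - N*k*c) / (D*D)"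
    by (simp add: algebra_simps)
  also have "\<dots> = k * M / (D * D)" using pd by (simp add: algebra_simps)
  also have "\<dots> = k * (M/D) / D" by simp
  finally show ?thesis .
qed

lemma lagrange2: "((p1::real)*q2 - p2*q1)^2 + (p1*q1 + p2*q2)^2 = (p1^2+p2^2)*(q1^2+q2^2)"
  by (simp add: algebra_simps power2_eq_square)

lemma half_angle:
  fixes C D :: real
  assumes C: "-1 < C" "C < 1" and D: "D > 0" "D^2 + C^2 = 1"
  shows "cot (arccos (- C) / 2) = (1 - C) / D" "2 * (sin (arccos (- C) / 2))^2 = 1 + C"
proof -
  define y where "y = arccos (- C) / 2"
  have cphi: "cos (2 * y) = - C" using C by (simp add: y_def)
  have "sin (2 * y) = sqrt (1 - (- C)^2)" using C by (simp add: y_def sin_arccos)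
  also have "\<dots> = D" using D by (simp add: real_sqrt_unique[of D] algebra_simps)
  finally have sphi: "sin (2 * y) = D" .
  have s2: "2 * (sin y)^2 = 1 + C" using cphi cos_double_sin[of y] by simp
  then show "2 * (sin (arccos (- C) / 2))^2 = 1 + C" by (simp add: y_def)
  have sy: "sin y \<noteq> 0" using s2 C by auto
  have "cot y = (2 * sin y * cos y) / (2 * (sin y)^2)" using sy by (simp add: cot_def power2_eq_square)
  also have "\<dots> = D / (1 + C)" using sphi s2 sin_double[of y] by simp
  also have "\<dots> = (1 - C) / D"
  proof -
    have nz: "1 + C \<noteq> 0" "D \<noteq> 0" using C D by auto
    show ?thesis unfolding frac_eq_eq[OF nz] using D(2) by (simp add: algebra_simps power2_eq_square)
  qed
  finally show "cot (arccos (- C) / 2) = (1 - C) / D" by (simp add: y_def)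
qed

definition det2 :: "real^2 \<Rightarrow> real^2 \<Rightarrow> real" where
  "det2 u v = u$1 * v$2 - u$2 * v$1"

locale oval_ctx = fixes \<gamma> :: "real \<Rightarrow> real^2" and L :: real
  assumes oval: "arclength_oval \<gamma> L"
begin

lemma Lpos: "L > 0" using oval by (simp add: arclength_oval_def)
lemma per: "\<gamma> (s + L) = \<gamma> s" using oval by (simp add: arclength_oval_def)
lemma smooth: "(vderiv ^^ n) \<gamma> differentiable (at t)"
  using oval by (simp add: arclength_oval_def smooth_curve_def)
lemma injL: "inj_on \<gamma> {0..<L}" using oval by (simp add: arclength_oval_def)

lemma dg: "\<gamma> differentiable (at t)" using smooth[of 0] by simp
lemma dT: "vderiv \<gamma> differentiable (at t)" using smooth[of 1] by simp
lemma dT2: "vderiv (vderiv \<gamma>) differentiable (at t)" using smooth[of 2] by (simp add: numeral_2_eq_2)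

lemma der_g: "(\<gamma> has_vector_derivative vderiv \<gamma> s) (at s)"
  using dg vector_derivative_works unfolding vderiv_def by blast
lemma der_T: "(vderiv \<gamma> has_vector_derivative vderiv (vderiv \<gamma>) s) (at s)"
  using dT vector_derivative_works unfolding vderiv_def[of "vderiv \<gamma>"] by blast

lemma cont_g: "continuous_on UNIV \<gamma>"
  using dg differentiable_imp_continuous_within continuous_on_eq_continuous_within by blast
lemma cont_T: "continuous_on UNIV (vderiv \<gamma>)"
  using dT differentiable_imp_continuous_within continuous_on_eq_continuous_within by blast
lemma cont_T2: "continuous_on UNIV (vderiv (vderiv \<gamma>))"
  using dT2 differentiable_imp_continuous_within continuous_on_eq_continuous_within by blast

lemma unit: "(vderiv \<gamma> s $ 1)^2 + (vderiv \<gamma> s $ 2)^2 = 1"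
proof -
  have "norm (vderiv \<gamma> s) = 1" using oval by (simp add: arclength_oval_def tangent_def)
  then show ?thesis by (simp add: n2)
qed

lemma kdef: "curvature \<gamma> s = vderiv \<gamma> s $ 1 * vderiv (vderiv \<gamma>) s $ 2 - vderiv \<gamma> s $ 2 * vderiv (vderiv \<gamma>) s $ 1"
  by (simp add: curvature_def Let_def)

lemma kpos: "curvature \<gamma> s > 0" using oval by (simp add: arclength_oval_def)

lemma orth: "vderiv \<gamma> s $ 1 * vderiv (vderiv \<gamma>) s $ 1 + vderiv \<gamma> s $ 2 * vderiv (vderiv \<gamma>) s $ 2 = 0"
proof -
  have "((\<lambda>s. (vderiv \<gamma> s $ 1)^2 + (vderiv \<gamma> s $ 2)^2) has_real_derivative
     2 * vderiv \<gamma> s $ 1 * vderiv (vderiv \<gamma>) s $ 1 + 2 * vderiv \<gamma> s $ 2 * vderiv (vderiv \<gamma>) s $ 2) (at s)"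
    by (auto intro!: derivative_eq_intros comp_der[OF der_T])
  moreover have "(\<lambda>s. (vderiv \<gamma> s $ 1)^2 + (vderiv \<gamma> s $ 2)^2) = (\<lambda>s. 1)" using unit by auto
  ultimately have "2 * vderiv \<gamma> s $ 1 * vderiv (vderiv \<gamma>) s $ 1 + 2 * vderiv \<gamma> s $ 2 * vderiv (vderiv \<gamma>) s $ 2 = 0"
    using DERIV_unique DERIV_const by metis
  then show ?thesis by simp
qed

lemma T2_1: "vderiv (vderiv \<gamma>) s $ 1 = - curvature \<gamma> s * vderiv \<gamma> s $ 2"
proof -
  define a where "a = vderiv \<gamma> s $ 1"
  define b where "b = vderiv \<gamma> s $ 2"
  define u where "u = vderiv (vderiv \<gamma>) s $ 1"
  define v where "v = vderiv (vderiv \<gamma>) s $ 2"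
  have uu: "a^2 + b^2 = 1" using unit unfolding a_def b_def .
  have ho: "a*u = -(b* v)" using orth[of s] unfolding a_def b_def u_def v_def by linarith
  have "-(a* v - b*u)*b = a*(-(b* v)) + b^2*u" by (simp add: algebra_simps power2_eq_square)
  also have "\<dots> = a*(a*u) + b^2*u" using ho by simp
  also have "\<dots> = (a^2+b^2)*u" by (simp add: algebra_simps power2_eq_square)
  finally have "u = -(a* v - b*u)*b" using uu by simp
  then show ?thesis unfolding kdef a_def b_def u_def v_def by simp
qed
lemma T2_2: "vderiv (vderiv \<gamma>) s $ 2 = curvature \<gamma> s * vderiv \<gamma> s $ 1"
proof -
  define a where "a = vderiv \<gamma> s $ 1"
  define b where "b = vderiv \<gamma> s $ 2"
  define u where "u = vderiv (vderiv \<gamma>) s $ 1"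
  define v where "v = vderiv (vderiv \<gamma>) s $ 2"
  have uu: "a^2 + b^2 = 1" using unit unfolding a_def b_def .
  have ho: "b* v = -(a*u)" using orth[of s] unfolding a_def b_def u_def v_def by linarith
  have "(a* v - b*u)*a = a^2* v - b*(a*u)" by (simp add: algebra_simps power2_eq_square)
  also have "\<dots> = a^2* v + b*(b* v)" using ho by simp
  also have "\<dots> = (a^2+b^2)* v" by (simp add: algebra_simps power2_eq_square)
  finally have "v = (a* v - b*u)*a" using uu by simp
  then show ?thesis unfolding kdef a_def b_def u_def v_def by simp
qed

lemma perT: "vderiv \<gamma> (s + L) = vderiv \<gamma> s"
  by (rule periodic_vderiv[OF per dg])
lemma perT2: "vderiv (vderiv \<gamma>) (s + L) = vderiv (vderiv \<gamma>) s"
  by (rule periodic_vderiv[OF perT dT])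
lemma perk: "curvature \<gamma> (s + L) = curvature \<gamma> s"
  by (simp add: kdef perT perT2)

lemma cont_k: "continuous_on UNIV (curvature \<gamma>)"
  unfolding kdef[abs_def]
  using cont_T cont_T2 by (intro continuous_intros) auto

lemma same_point:
  assumes "\<gamma> u = \<gamma> v" shows "\<exists>n::int. u = v + of_int n * L"
proof -
  define nu where "nu = \<lfloor>u / L\<rfloor>"
  define nv where "nv = \<lfloor>v / L\<rfloor>"
  have Lp: "L > 0" by (rule Lpos)
  have a: "u - of_int nu * L \<in> {0..<L}"
    using floor_divide_lower[OF Lp, of u] floor_divide_upper[OF Lp, of u] unfolding nu_def
    by (auto simp: algebra_simps)
  have b: "v - of_int nv * L \<in> {0..<L}"
    using floor_divide_lower[OF Lp, of v] floor_divide_upper[OF Lp, of v] unfolding nv_def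
    by (auto simp: algebra_simps)
  have "\<gamma> (u - of_int nu * L) = \<gamma> u" using periodic_int[of \<gamma> L u "-nu", OF per] by simp
  moreover have "\<gamma> (v - of_int nv * L) = \<gamma> v" using periodic_int[of \<gamma> L v "-nv", OF per] by simp
  ultimately have "u - of_int nu * L = v - of_int nv * L"
    using injL a b assms by (metis inj_onD)
  then have "u = v + of_int (nu - nv) * L" by (simp add: algebra_simps)
  then show ?thesis by blast
qed


abbreviation T where "T \<equiv> vderiv \<gamma>"
abbreviation k where "k \<equiv> curvature \<gamma>"

lemma dTx: "((\<lambda>s. T s $ 1) has_real_derivative - k s * T s $ 2) (at s)"
  using comp_der[OF der_T, where i=1] T2_1 by simp
lemma dTy: "((\<lambda>s. T s $ 2) has_real_derivative k s * T s $ 1) (at s)"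
  using comp_der[OF der_T, where i=2] T2_2 by simp
lemma dg1: "((\<lambda>s. \<gamma> s $ 1) has_real_derivative T s $ 1) (at s)"
  using comp_der[OF der_g, where i=1] by simp
lemma dg2: "((\<lambda>s. \<gamma> s $ 2) has_real_derivative T s $ 2) (at s)"
  using comp_der[OF der_g, where i=2] by simp

lemma alpha:
  assumes "c < d"
  obtains \<alpha> where "\<And>t. t \<in> {c<..<d} \<Longrightarrow> (\<alpha> has_real_derivative k t) (at t)"
    "\<And>t. t \<in> {c<..<d} \<Longrightarrow> T t $ 1 = cos (\<alpha> t) \<and> T t $ 2 = sin (\<alpha> t)"
proof -
  define \<beta> where "\<beta> t = integral {c..t} k" for t
  have dB: "(\<beta> has_real_derivative k t) (at t)" if "t \<in> {c<..<d}" for t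
  proof -
    have "continuous_on {c..d} k" using cont_k continuous_on_subset by blast
    then have "(\<beta> has_real_derivative k t) (at t within {c..d})"
      unfolding \<beta>_def using that by (intro integral_has_real_derivative) auto
    then show ?thesis using that at_within_Icc_at[of c t d] by auto
  qed
  define p where "p t = T t $ 1 * cos (\<beta> t) + T t $ 2 * sin (\<beta> t)" for t
  define q where "q t = T t $ 2 * cos (\<beta> t) - T t $ 1 * sin (\<beta> t)" for t
  have dp: "(p has_real_derivative 0) (at t)" if "t \<in> {c<..<d}" for t
    unfolding p_def[abs_def]
    by (rule derivative_eq_intros dTx dTy dB[OF that] refl | simp add: algebra_simps)+

  have dq: "(q has_real_derivative 0) (at t)" if "t \<in> {c<..<d}" for t
    unfolding q_def[abs_def]
    by (rule derivative_eq_intros dTx dTy dB[OF that] refl | simp add: algebra_simps)+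

  define m where "m = (c + d) / 2"
  have m: "m \<in> {c<..<d}" using assms by (auto simp: m_def)
  have pc: "p t = p m" if "t \<in> {c<..<d}" for t
    using DERIV_isconst3[OF assms that m] dp by blast
  have qc: "q t = q m" if "t \<in> {c<..<d}" for t
    using DERIV_isconst3[OF assms that m] dq by blast
  have "(p m)^2 + (q m)^2 = ((T m $ 1)^2 + (T m $ 2)^2) * ((sin (\<beta> m))^2 + (cos (\<beta> m))^2)"
    unfolding p_def q_def by (rule rot_norm)
  then have "(p m)^2 + (q m)^2 = 1" using unit by simp
  then obtain \<theta> where th: "p m = cos \<theta>" "q m = sin \<theta>" using sincos_total_2pi by metis
  show ?thesis
  proof
    fix t assume t: "t \<in> {c<..<d}"
    show "((\<lambda>t. \<theta> + \<beta> t) has_real_derivative k t) (at t)"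
      using dB[OF t] by (auto intro!: derivative_eq_intros)
    have sc: "(sin (\<beta> t))^2 + (cos (\<beta> t))^2 = 1" by simp
    have e1: "T t $ 1 = p t * cos (\<beta> t) - q t * sin (\<beta> t)"
      unfolding p_def q_def using rot_inv1[of "T t $ 1" "cos (\<beta> t)" "T t $ 2" "sin (\<beta> t)"] by simp
    have e2: "T t $ 2 = p t * sin (\<beta> t) + q t * cos (\<beta> t)"
      unfolding p_def q_def using rot_inv2[of "T t $ 1" "cos (\<beta> t)" "T t $ 2" "sin (\<beta> t)"] by simp
    show "T t $ 1 = cos (\<theta> + \<beta> t) \<and> T t $ 2 = sin (\<theta> + \<beta> t)"
      using e1 e2 pc[OF t] qc[OF t] th by (simp add: cos_add sin_add algebra_simps)
  qed
qed


definition Dq :: "real \<times> real \<Rightarrow> real^2" where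
  "Dq z = (if fst z = snd z then T (fst z) else (1 / (snd z - fst z)) *\<^sub>R (\<gamma> (snd z) - \<gamma> (fst z)))"

lemma isCont_g: "isCont \<gamma> t" using cont_g by (simp add: continuous_on_eq_continuous_at)
lemma isCont_T: "isCont T t" using cont_T by (simp add: continuous_on_eq_continuous_at)

lemma secant_bound:
  assumes d: "\<And>u. \<bar>u - p\<bar> < d \<Longrightarrow> norm (T u - T p) \<le> e"
    and s: "\<bar>s - p\<bar> < d" and t: "\<bar>t - p\<bar> < d"
  shows "norm ((\<gamma> t - t *\<^sub>R T p) - (\<gamma> s - s *\<^sub>R T p)) \<le> e * norm (t - s)"
proof -
  let ?S = "{min s t .. max s t}"
  have "norm ((\<lambda>u. \<gamma> u - u *\<^sub>R T p) t - (\<lambda>u. \<gamma> u - u *\<^sub>R T p) s) \<le> e * norm (t - s)"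
  proof (rule differentiable_bound[where f' = "\<lambda>u h. h *\<^sub>R (T u - T p)"])
    show "convex ?S" by (rule convex_real_interval)
    fix u assume u: "u \<in> ?S"
    have "((\<lambda>x. x *\<^sub>R T p) has_vector_derivative T p) (at u)"
      unfolding has_vector_derivative_def by (rule bounded_linear_imp_has_derivative[OF bounded_linear_scaleR_left])
    then have "((\<lambda>u. \<gamma> u - u *\<^sub>R T p) has_vector_derivative (T u - T p)) (at u)"
      by (intro has_vector_derivative_diff der_g)
    then show "((\<lambda>u. \<gamma> u - u *\<^sub>R T p) has_derivative (\<lambda>h. h *\<^sub>R (T u - T p))) (at u within ?S)"
      unfolding has_vector_derivative_def by (simp add: has_derivative_at_withinI)
    have "onorm (\<lambda>h. h *\<^sub>R (T u - T p)) = norm (T u - T p)"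
      using onorm_scaleR_left[of "\<lambda>x::real. x" "T u - T p"] onorm_id[where 'a=real] by simp
    also have "\<dots> \<le> e" using u s t by (intro d) auto
    finally show "onorm (\<lambda>h. h *\<^sub>R (T u - T p)) \<le> e" .
  qed (auto)
  then show ?thesis by simp
qed

lemma Dq_cont: "continuous (at z) Dq"
proof (cases "fst z = snd z")
  case False
  define r where "r = dist (fst z) (snd z) / 2"
  have r: "r > 0" using False by (simp add: r_def)
  have "continuous (at z) (\<lambda>w. (1 / (snd w - fst w)) *\<^sub>R (\<gamma> (snd w) - \<gamma> (fst w)))"
  proof -
    have c1: "continuous (at z) (\<lambda>w. \<gamma> (snd w))"
      using continuous_at_compose[OF continuous_snd[OF continuous_ident] isCont_g] by (simp add: comp_def)
    have c2: "continuous (at z) (\<lambda>w. \<gamma> (fst w))"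
      using continuous_at_compose[OF continuous_fst[OF continuous_ident] isCont_g] by (simp add: comp_def)
    show ?thesis using False
      by (intro continuous_intros c1 c2) (auto simp: prod_eq_iff)
  qed
  then show ?thesis
  proof (rule continuous_transform_within[OF _ r])
    fix w assume "dist w z < r"
    then have "dist (fst w) (fst z) < r" "dist (snd w) (snd z) < r"
      using dist_fst_le[of w z] dist_snd_le[of w z] by linarith+
    then have "fst w \<noteq> snd w" unfolding r_def dist_real_def by (auto simp: abs_if split: if_splits)
    then show "(1 / (snd w - fst w)) *\<^sub>R (\<gamma> (snd w) - \<gamma> (fst w)) = Dq w" by (simp add: Dq_def)
  qed auto
next
  case True
  define p where "p = fst z"
  have zp: "z = (p, p)" using True by (simp add: p_def prod_eq_iff)
  show ?thesis unfolding continuous_at_eps_delta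
  proof (intro allI impI)
    fix e :: real assume e: "e > 0"
    obtain d where d: "d > 0" "\<And>u. dist u p < d \<Longrightarrow> dist (T u) (T p) < e/2"
      using isCont_T[of p] e unfolding continuous_at_eps_delta by (meson half_gt_zero)
    show "\<exists>d>0. \<forall>w. dist w z < d \<longrightarrow> dist (Dq w) (Dq z) < e"
    proof (intro exI[of _ d] conjI allI impI d(1))
      fix w assume w: "dist w z < d"
      have s: "\<bar>fst w - p\<bar> < d" "\<bar>snd w - p\<bar> < d"
        using dist_fst_le[of w z] dist_snd_le[of w z] w zp by (auto simp: dist_real_def)
      show "dist (Dq w) (Dq z) < e"
      proof (cases "fst w = snd w")
        case True
        then show ?thesis using d(2)[of "fst w"] s zp e zero_le_dist[of "T (snd w)" "T p"]
          by (simp add: Dq_def dist_real_def; linarith)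
      next
        case False
        have "norm ((\<gamma> (snd w) - snd w *\<^sub>R T p) - (\<gamma> (fst w) - fst w *\<^sub>R T p)) \<le> e/2 * norm (snd w - fst w)"
          using d(2) s by (intro secant_bound[of p d]) (auto simp: dist_norm less_imp_le)
        then have "norm ((\<gamma> (snd w) - \<gamma> (fst w)) - (snd w - fst w) *\<^sub>R T p) \<le> e/2 * \<bar>snd w - fst w\<bar>"
          by (simp add: algebra_simps)
        then have "norm ((1 / (snd w - fst w)) *\<^sub>R ((\<gamma> (snd w) - \<gamma> (fst w)) - (snd w - fst w) *\<^sub>R T p)) \<le> e/2"
          using False by (intro scale_bound) auto
        then have "norm ((1 / (snd w - fst w)) *\<^sub>R (\<gamma> (snd w) - \<gamma> (fst w)) - T p) \<le> e/2"
          using False by (simp only: scale_sub)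
        then show ?thesis using False e zp by (simp add: Dq_def dist_norm)
      qed
    qed
  qed
qed


lemma normT: "norm (T s) = 1" using oval by (simp add: arclength_oval_def tangent_def)
lemma Tnz: "T s \<noteq> 0" using normT[of s] by auto
lemma sgn_cpxT: "sgn (cpx (T s)) = cpx (T s)"
  by (simp add: sgn_div_norm cpx_norm normT)
lemma norm_cpxT: "cmod (cpx (T s)) = 1" by (simp add: cpx_norm normT)

lemma simple_tri:
  assumes "s0 \<le> s" "s < t" "t \<le> s0 + L" "\<not> (s = s0 \<and> t = s0 + L)"
  shows "\<gamma> s \<noteq> \<gamma> t"
proof
  assume "\<gamma> s = \<gamma> t"
  then obtain n :: int where n: "t = s + of_int n * L" using same_point[of t s] by metis
  have Lp: "L > 0" by (rule Lpos)
  have "0 < of_int n * L" using n assms by simp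
  then have "0 < (of_int n :: real)" using Lp by (simp add: zero_less_mult_iff)
  moreover have nL: "of_int n * L \<le> L" using n assms by linarith
  have "(of_int n :: real) \<le> 1"
  proof (rule ccontr)
    assume "\<not> (of_int n :: real) \<le> 1"
    then have "1 * L < of_int n * L" using Lp by (intro mult_strict_right_mono) auto
    then show False using nL by simp
  qed
  ultimately have "n = 1" by linarith
  then show False using n assms by simp
qed

lemma tri_convex: "convex {z::real\<times>real. a \<le> fst z \<and> fst z \<le> snd z \<and> snd z \<le> b}"
proof (rule convexI)
  fix x y :: "real \<times> real" and u v :: real
  assume x: "x \<in> {z. a \<le> fst z \<and> fst z \<le> snd z \<and> snd z \<le> b}"
    and y: "y \<in> {z. a \<le> fst z \<and> fst z \<le> snd z \<and> snd z \<le> b}"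
    and uv0: "0 \<le> u" "0 \<le> v" "u + v = 1"
  have uv: "0 \<le> u \<and> 0 \<le> v \<and> u + v = 1" using uv0 by simp
  have m: "u * p + v * q \<le> u * p' + v * q'" if "p \<le> p'" "q \<le> q'" for p q p' q' :: real
    using uv that by (intro add_mono mult_left_mono) auto
  have "u * a + v * a \<le> u * fst x + v * fst y" using x y by (intro m) auto
  moreover have "u * fst x + v * fst y \<le> u * snd x + v * snd y" using x y by (intro m) auto
  moreover have "u * snd x + v * snd y \<le> u * b + v * b" using x y by (intro m) auto
  moreover have "u * a + v * a = a" "u * b + v * b = b" using uv by (simp_all add: algebra_simps flip: distrib_left distrib_right)
  ultimately show "u *\<^sub>R x + v *\<^sub>R y \<in> {z. a \<le> fst z \<and> fst z \<le> snd z \<and> snd z \<le> b}"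
    by simp
qed

lemma chern:
  assumes low: "\<And>t. \<gamma> s0 $ 2 \<le> \<gamma> t $ 2"
    and c\<beta>: "continuous_on {s0..s0+L} \<beta>"
    and e\<beta>: "\<And>t. t \<in> {s0..s0+L} \<Longrightarrow> T t $ 1 = cos (\<beta> t) \<and> T t $ 2 = sin (\<beta> t)"
  shows "\<beta> (s0+L) - \<beta> s0 = 2*pi \<or> \<beta> (s0+L) - \<beta> s0 = -2*pi"
proof -
  have Lp: "L > 0" by (rule Lpos)
  define Tri where "Tri = {z::real\<times>real. s0 \<le> fst z \<and> fst z \<le> snd z \<and> snd z \<le> s0 + L}"
  define cn where "cn = (s0, s0 + L)"
  define f where "f z = (if z = cn then - cpx (T s0) else sgn (cpx (Dq z)))" for z
  have Dnz: "Dq z \<noteq> 0" if "z \<in> Tri" "z \<noteq> cn" for z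
  proof (cases "fst z = snd z")
    case True then show ?thesis by (simp add: Dq_def Tnz)
  next
    case False
    then have "\<gamma> (fst z) \<noteq> \<gamma> (snd z)" using that
      by (intro simple_tri[of s0]) (auto simp: Tri_def cn_def prod_eq_iff)
    then show ?thesis using False by (simp add: Dq_def)
  qed
  have cnT: "cn \<in> Tri" using Lp by (simp add: Tri_def cn_def)
  have f_nz: "norm (f z) = 1" if "z \<in> Tri" for z
  proof (cases "z = cn")
    case True then show ?thesis by (simp add: f_def norm_cpxT)
  next
    case False then show ?thesis using Dnz[OF that False] by (simp add: f_def norm_sgn cpx_0)
  qed
  have cont_f: "continuous_on Tri f"
    unfolding continuous_on_eq_continuous_within
  proof
    fix z assume z: "z \<in> Tri"
    show "continuous (at z within Tri) f"
    proof (cases "z = cn")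
      case False
      have "continuous (at z) (\<lambda>w. sgn (cpx (Dq w)))"
        using Dnz[OF z False] by (intro continuous_sgn cont_cpx Dq_cont) (simp add: Lim_ident_at trivial_limit_at cpx_0)
      then have "continuous (at z within Tri) (\<lambda>w. sgn (cpx (Dq w)))"
        by (rule continuous_at_imp_continuous_within)
      then show ?thesis
      proof (rule continuous_transform_within[of _ _ _ "dist z cn"])
        show "0 < dist z cn" using False by simp
        fix w assume "w \<in> Tri" "dist w z < dist z cn"
        then have "w \<noteq> cn" by (auto simp: dist_commute)
        then show "sgn (cpx (Dq w)) = f w" by (simp add: f_def)
      qed (use z in auto)
    next
      case True
      define F where "F w = - sgn (cpx (Dq (snd w, fst w + L)))" for w
      have "continuous (at z) (\<lambda>w. Dq (snd w, fst w + L))"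
        by (intro continuous_at_compose[OF _ Dq_cont, unfolded comp_def] continuous_intros)
      moreover have "Dq (snd z, fst z + L) \<noteq> 0" using True by (simp add: cn_def Dq_def Tnz)
      ultimately have "continuous (at z) F" unfolding F_def
        by (intro continuous_intros continuous_sgn cont_cpx) (simp_all add: Lim_ident_at trivial_limit_at cpx_0)
      then have "continuous (at z within Tri) F"
        by (rule continuous_at_imp_continuous_within)
      then show ?thesis
      proof (rule continuous_transform_within[of _ _ _ "L/2"])
        show "0 < L/2" using Lp by simp
        fix w assume w: "w \<in> Tri" "dist w z < L/2"
        show "F w = f w"
        proof (cases "w = cn")
          case True
          then show ?thesis by (simp add: F_def f_def cn_def Dq_def perT[of s0] sgn_cpxT)
        next
          case False
          define s t where "s = fst w" and "t = snd w"
          have "dist s s0 < L/2" "dist t (s0+L) < L/2"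
            using w(2) True dist_fst_le[of w z] dist_snd_le[of w z] by (auto simp: cn_def s_def t_def)
          then have st: "s < t" using w(1) by (auto simp: dist_real_def Tri_def s_def t_def)
          have ts: "t < s + L" using w(1) False by (auto simp: Tri_def cn_def s_def t_def prod_eq_iff)
          have "f w = sgn (cpx ((1 / (t - s)) *\<^sub>R (\<gamma> t - \<gamma> s)))"
            using False st by (simp add: f_def Dq_def s_def t_def)
          also have "\<dots> = sgn (cpx (\<gamma> t - \<gamma> s))" by (subst cpx_scale, subst sgn_pos_scale) (use st in auto)
          also have "\<dots> = - sgn (cpx (\<gamma> s - \<gamma> t))"
            by (simp add: cpx_diff flip: sgn_minus)
          also have "\<dots> = - sgn (cpx ((1 / (s + L - t)) *\<^sub>R (\<gamma> (s + L) - \<gamma> t)))"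
            by (subst cpx_scale, subst sgn_pos_scale) (use ts in \<open>auto simp: per\<close>)
          also have "\<dots> = F w" using ts by (simp add: F_def Dq_def s_def t_def)
          finally show ?thesis by simp
        qed
      qed (use z in auto)
    qed
  qed
  have "convex Tri" unfolding Tri_def by (rule tri_convex)
  then obtain g where cg: "continuous_on Tri g" and fg: "\<And>z. z \<in> Tri \<Longrightarrow> f z = exp (g z)"
    using continuous_logarithm_on_contractible[OF cont_f convex_imp_contractible] f_nz
    by (metis norm_zero zero_neq_one)
  have Lp2: "s0 < s0 + L" using Lp by simp
  have T0: "T s0 $ 2 = 0"
    using DERIV_local_min[OF dg2[of s0] zero_less_one] low by blast
  have T1: "(T s0 $ 1)^2 = 1" using unit[of s0] T0 by simp
  define C0 where "C0 = cpx (T s0)"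
  have C0: "C0 = 1 \<or> C0 = -1"
  proof -
    have "T s0 $ 1 = 1 \<or> T s0 $ 1 = -1" using T1 by (simp add: power2_eq_1_iff)
    then show ?thesis using T0 by (auto simp: C0_def cpx_def complex_eq_iff)
  qed
  have fcn: "f cn = - C0" by (simp add: f_def C0_def)
  have fdiag: "f (s, s) = cpx (T s)" for s
    using Lp by (auto simp: f_def cn_def Dq_def sgn_cpxT)
  have fD: "f z = sgn (cpx (Dq z))" if "z \<noteq> cn" for z using that by (simp add: f_def)
  have inTri1: "(s0, t) \<in> Tri" if "t \<in> {s0..s0+L}" for t using that by (simp add: Tri_def)
  have inTri2: "(t, s0 + L) \<in> Tri" if "t \<in> {s0..s0+L}" for t using that by (simp add: Tri_def)
  have inTri3: "(t, t) \<in> Tri" if "t \<in> {s0..s0+L}" for t using that by (simp add: Tri_def)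
  have cpair1: "continuous_on {s0..s0+L} (\<lambda>t. (s0, t))" by (intro continuous_intros)
  have cpair2: "continuous_on {s0..s0+L} (\<lambda>t. (t, s0 + L))" by (intro continuous_intros)
  have cpair3: "continuous_on {s0..s0+L} (\<lambda>t. (t, t))" by (intro continuous_intros)
  define \<delta> where "\<delta> = Arg2pi (- C0) - Arg2pi C0"
  have edge1: "g (s0, s0+L) - g (s0, s0) = \<i> * of_real \<delta>"
  proof -
    have "(\<lambda>t. g (s0, t)) (s0+L) - (\<lambda>t. g (s0, t)) s0
        = \<i> * of_real (Arg2pi ((\<lambda>t. f (s0, t)) (s0+L)) - Arg2pi ((\<lambda>t. f (s0, t)) s0))"
    proof (rule edge_up)
      show "continuous_on {s0..s0+L} (\<lambda>t. g (s0, t))"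
        by (rule continuous_on_compose2[OF cg cpair1]) (auto intro: inTri1)
      show "continuous_on {s0..s0+L} (\<lambda>t. f (s0, t))"
        by (rule continuous_on_compose2[OF cont_f cpair1]) (auto intro: inTri1)
      fix t assume t: "t \<in> {s0..s0+L}"
      show "f (s0, t) = exp (g (s0, t))" using fg inTri1[OF t] by blast
      show "norm (f (s0, t)) = 1" using f_nz inTri1[OF t] by blast
      show "0 \<le> Im (f (s0, t))"
      proof (cases "(s0, t) = cn")
        case True then show ?thesis by (simp add: fcn C0_def T0)
      next
        case False
        have "0 \<le> Im (cpx (Dq (s0, t)))"
        proof (cases "s0 = t")
          case True then show ?thesis using T0 by (simp add: Dq_def)
        next
          case False
          then have "t > s0" using t by simp
          then show ?thesis using low[of t] by (simp add: Dq_def)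
        qed
        then show ?thesis using fD[OF False] by simp
      qed
    qed (use Lp in simp)
    then show ?thesis using fdiag[of s0] fcn[unfolded cn_def] by (simp add: \<delta>_def C0_def[symmetric])
  qed
  have edge2: "g (s0+L, s0+L) - g (s0, s0+L) = \<i> * of_real \<delta>"
  proof -
    have "(\<lambda>t. g (t, s0+L) + \<i> * pi) (s0+L) - (\<lambda>t. g (t, s0+L) + \<i> * pi) s0
        = \<i> * of_real (Arg2pi ((\<lambda>t. - f (t, s0+L)) (s0+L)) - Arg2pi ((\<lambda>t. - f (t, s0+L)) s0))"
    proof (rule edge_up)
      show "continuous_on {s0..s0+L} (\<lambda>t. g (t, s0+L) + \<i> * pi)"
        by (intro continuous_intros continuous_on_compose2[OF cg cpair2]) (auto intro: inTri2)
      show "continuous_on {s0..s0+L} (\<lambda>t. - f (t, s0+L))"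
        by (intro continuous_intros continuous_on_compose2[OF cont_f cpair2]) (auto intro: inTri2)
      fix t assume t: "t \<in> {s0..s0+L}"
      show "- f (t, s0+L) = exp (g (t, s0+L) + \<i> * pi)" using fg inTri2[OF t] by (simp add: exp_add)
      show "norm (- f (t, s0+L)) = 1" using f_nz inTri2[OF t] by simp
      show "0 \<le> Im (- f (t, s0+L))"
      proof (cases "(t, s0+L) = cn")
        case True then show ?thesis by (simp add: fcn C0_def T0)
      next
        case False
        have "Im (cpx (Dq (t, s0+L))) \<le> 0"
        proof (cases "t = s0 + L")
          case True then show ?thesis using perT[of s0] by (simp add: Dq_def T0)
        next
          case False
          then have "t < s0 + L" using t by simp
          then show ?thesis using low[of t] by (simp add: Dq_def per divide_nonpos_pos)
        qed
        then show ?thesis using fD[OF False] by (simp add: divide_nonpos_nonneg)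
      qed
    qed (use Lp in simp)
    then show ?thesis using fdiag[of "s0+L"] perT[of s0] fcn[unfolded cn_def]
      by (simp add: \<delta>_def C0_def[symmetric])
  qed
  have "(\<lambda>t. g (t, t)) (s0+L) - (\<lambda>t. \<i> * of_real (\<beta> t)) (s0+L)
      = (\<lambda>t. g (t, t)) s0 - (\<lambda>t. \<i> * of_real (\<beta> t)) s0"
  proof (rule exp_lift_const[of "{s0..s0+L}"])
    show "continuous_on {s0..s0+L} (\<lambda>t. g (t, t))"
      by (rule continuous_on_compose2[OF cg cpair3]) (auto intro: inTri3)
    show "continuous_on {s0..s0+L} (\<lambda>t. \<i> * of_real (\<beta> t))"
      using c\<beta> by (intro continuous_intros)
    fix t assume t: "t \<in> {s0..s0+L}"
    have "exp (g (t, t)) = cpx (T t)" using fg[OF inTri3[OF t]] fdiag[of t] by simp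
    also have "\<dots> = exp (\<i> * of_real (\<beta> t))" using e\<beta>[OF t]
      by (simp add: cpx_def complex_eq_iff Re_exp Im_exp)
    finally show "exp (g (t, t)) = exp (\<i> * of_real (\<beta> t))" .
  qed (use Lp in auto)
  then have "\<i> * of_real (\<beta> (s0+L) - \<beta> s0) = \<i> * of_real (2 * \<delta>)"
    using edge1 edge2 by (simp add: algebra_simps)
  then have "Im (\<i> * of_real (\<beta> (s0+L) - \<beta> s0)) = Im (\<i> * of_real (2 * \<delta>))" by (rule arg_cong)
  then have bd: "\<beta> (s0+L) - \<beta> s0 = 2 * \<delta>" by (simp only: Im_i_times Re_complex_of_real)
  have "\<delta> = pi \<or> \<delta> = - pi"
    using C0 by (auto simp: \<delta>_def Arg2pi_real)
  then show ?thesis using bd by auto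
qed



lemma reduce: "\<exists>t'. t' \<in> {s..<s+L} \<and> \<gamma> t' = \<gamma> t"
proof -
  have Lp: "L > 0" by (rule Lpos)
  define n where "n = \<lfloor>(t - s) / L\<rfloor>"
  have "t - of_int n * L - s \<in> {0..<L}"
    using floor_divide_lower[OF Lp, of "t - s"] floor_divide_upper[OF Lp, of "t - s"] unfolding n_def
    by (auto simp: algebra_simps)
  moreover have "\<gamma> (t - of_int n * L) = \<gamma> t" using periodic_int[of \<gamma> L t "-n", OF per] by simp
  ultimately show ?thesis by (intro exI[of _ "t - of_int n * L"]) auto
qed

lemma lowest: obtains s0 where "\<And>t. \<gamma> s0 $ 2 \<le> \<gamma> t $ 2"
proof -
  have "continuous_on {0..L} (\<lambda>t. \<gamma> t $ 2)"
    using cont_g by (intro continuous_intros) (auto intro: continuous_on_subset)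
  then obtain s0 where s0: "s0 \<in> {0..L}" "\<And>y. y \<in> {0..L} \<Longrightarrow> \<gamma> s0 $ 2 \<le> \<gamma> y $ 2"
    using continuous_attains_inf[of "{0..L}" "\<lambda>t. \<gamma> t $ 2"] Lpos by fastforce
  show ?thesis
  proof (rule that)
    fix t
    obtain t' where "t' \<in> {0..<0+L}" "\<gamma> t' = \<gamma> t" using reduce[of 0 t] by blast
    then show "\<gamma> s0 $ 2 \<le> \<gamma> t $ 2" using s0(2)[of t'] by auto
  qed
qed

lemma alpha_mono:
  assumes d\<alpha>: "\<And>t. t \<in> {c<..<d} \<Longrightarrow> (\<alpha> has_real_derivative k t) (at t)"
    and "c < a" "a < b" "b < d"
  shows "\<alpha> a < \<alpha> b"
proof (rule DERIV_pos_imp_increasing[OF assms(3)])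
  fix x assume "a \<le> x" "x \<le> b"
  then have "(\<alpha> has_real_derivative k x) (at x)" using assms by (intro d\<alpha>) auto
  then show "\<exists>y. (\<alpha> has_real_derivative y) (at x) \<and> y > 0" using kpos by blast
qed

lemma wind:
  assumes d\<alpha>: "\<And>t. t \<in> {c<..<d} \<Longrightarrow> (\<alpha> has_real_derivative k t) (at t)"
    and e\<alpha>: "\<And>t. t \<in> {c<..<d} \<Longrightarrow> T t $ 1 = cos (\<alpha> t) \<and> T t $ 2 = sin (\<alpha> t)"
    and cs: "c < s" and sd: "s + 2 * L < d"
  shows "\<alpha> (s + L) - \<alpha> s = 2 * pi"
proof -
  have Lp: "L > 0" by (rule Lpos)
  obtain s1 where s1: "\<And>t. \<gamma> s1 $ 2 \<le> \<gamma> t $ 2" using lowest by blast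
  obtain s0 where s0: "s0 \<in> {s..<s+L}" "\<gamma> s0 = \<gamma> s1" using reduce[of s s1] by blast
  have low: "\<gamma> s0 $ 2 \<le> \<gamma> t $ 2" for t using s1 s0 by simp
  have sub: "{s0..s0+L} \<subseteq> {c<..<d}" using s0 cs sd Lp by auto
  have c\<alpha>: "continuous_on {s0..s0+L} \<alpha>"
  proof (rule DERIV_atLeastAtMost_imp_continuous_on)
    fix x assume "s0 \<le> x" "x \<le> s0 + L"
    then have "x \<in> {c<..<d}" using sub by auto
    then show "\<exists>y. (\<alpha> has_real_derivative y) (at x)" using d\<alpha> by blast
  qed
  have ch: "\<alpha> (s0+L) - \<alpha> s0 = 2*pi \<or> \<alpha> (s0+L) - \<alpha> s0 = -2*pi"
    by (rule chern[OF low c\<alpha>]) (use e\<alpha> sub in auto)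
  have "\<alpha> s0 < \<alpha> (s0 + L)"
    by (rule alpha_mono[OF d\<alpha>]) (use s0 cs sd Lp in auto)
  then have w0: "\<alpha> (s0+L) - \<alpha> s0 = 2*pi" using ch pi_gt_zero by linarith
  have "(\<lambda>t. \<alpha> (t + L) - \<alpha> t) s = (\<lambda>t. \<alpha> (t + L) - \<alpha> t) s0"
  proof (rule DERIV_isconst3[of c "d - L" s s0 "\<lambda>t. \<alpha> (t + L) - \<alpha> t"])
    show "c < d - L" using cs sd Lp by simp
    show "s \<in> {c<..<d - L}" "s0 \<in> {c<..<d - L}" using cs sd Lp s0 by auto
    fix t assume t: "t \<in> {c<..<d - L}"
    have "((\<lambda>t. \<alpha> (t + L) - \<alpha> t) has_real_derivative k (t + L) * 1 - k t) (at t)"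
    proof -
      have d1: "(\<alpha> has_real_derivative k t) (at t)" using t Lp by (intro d\<alpha>) auto
      have "(\<alpha> has_real_derivative k (t + L)) (at (t + L))" using t Lp by (intro d\<alpha>) auto
      then have d2: "((\<lambda>z. \<alpha> (z + L)) has_real_derivative k (t + L)) (at t)" by (simp add: DERIV_shift)
      show ?thesis using DERIV_diff[OF d2 d1] by simp
    qed
    then show "((\<lambda>t. \<alpha> (t + L) - \<alpha> t) has_real_derivative 0) (at t)" by (simp add: perk)
  qed
  then show ?thesis using w0 by simp
qed

lemma support:
  assumes neq: "\<gamma> u \<noteq> \<gamma> s"
  shows "det2 (T s) (\<gamma> u - \<gamma> s) > 0"
proof -
  have Lp: "L > 0" by (rule Lpos)
  obtain u' where u': "u' \<in> {s..<s+L}" "\<gamma> u' = \<gamma> u" using reduce[of s u] by blast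
  have su: "s < u'" using u' neq by (cases "s = u'") auto
  obtain \<alpha> where d\<alpha>: "\<And>t. t \<in> {s-1<..<s+2*L+1} \<Longrightarrow> (\<alpha> has_real_derivative k t) (at t)"
    and e\<alpha>: "\<And>t. t \<in> {s-1<..<s+2*L+1} \<Longrightarrow> T t $ 1 = cos (\<alpha> t) \<and> T t $ 2 = sin (\<alpha> t)"
    using alpha[of "s-1" "s+2*L+1"] Lp by auto
  have w: "\<alpha> (s + L) - \<alpha> s = 2 * pi" by (rule wind[OF d\<alpha> e\<alpha>]) auto
  have mono: "\<alpha> a < \<alpha> b" if "s \<le> a" "a < b" "b \<le> s + L" for a b
    by (rule alpha_mono[OF d\<alpha>]) (use that Lp in auto)
  define h where "h t = det2 (T s) (\<gamma> t - \<gamma> s)" for t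
  have dh: "(h has_real_derivative sin (\<alpha> t - \<alpha> s)) (at t)" if "t \<in> {s..s+L}" for t
  proof -
    have "(h has_real_derivative T s $ 1 * (T t $ 2 - 0) - T s $ 2 * (T t $ 1 - 0)) (at t)"
      unfolding h_def[abs_def] det2_def vector_minus_component
      by (auto intro!: derivative_eq_intros dg1 dg2)
    moreover have "T s $ 1 * (T t $ 2 - 0) - T s $ 2 * (T t $ 1 - 0) = sin (\<alpha> t - \<alpha> s)"
      using e\<alpha>[of s] e\<alpha>[of t] that Lp by (simp add: sin_diff algebra_simps)
    ultimately show ?thesis by simp
  qed
  have ch: "continuous_on {a..b} h" if "s \<le> a" "b \<le> s + L" for a b
  proof (rule DERIV_atLeastAtMost_imp_continuous_on)
    fix x assume "a \<le> x" "x \<le> b"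
    then show "\<exists>y. (h has_real_derivative y) (at x)" using dh[of x] that by auto
  qed
  have h0: "h s = 0" by (simp add: h_def det2_def)
  have hL: "h (s + L) = 0" by (simp add: h_def det2_def per)
  have "h u' > 0"
  proof (cases "\<alpha> u' - \<alpha> s \<le> pi")
    case True
    have "h s < h u'"
    proof (rule DERIV_pos_imp_increasing_open[OF su _ ch])
      fix t assume t: "s < t" "t < u'"
      have "0 < \<alpha> t - \<alpha> s" using mono[of s t] t u' by auto
      moreover have "\<alpha> t - \<alpha> s < pi" using mono[of t u'] t u' True by auto
      ultimately show "\<exists>y. (h has_real_derivative y) (at t) \<and> y > 0"
        using dh[of t] t u' by (intro exI[of _ "sin (\<alpha> t - \<alpha> s)"]) (auto intro: sin_gt_zero)
    qed (use u' in auto)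
    then show ?thesis using h0 by simp
  next
    case False
    have uL: "u' < s + L" using u' by auto
    have "h u' > h (s + L)"
    proof (rule DERIV_neg_imp_decreasing_open[OF uL _ ch])
      fix t assume t: "u' < t" "t < s + L"
      have "pi < \<alpha> t - \<alpha> s" using mono[of u' t] t u' su False by auto
      moreover have "\<alpha> t - \<alpha> s < 2 * pi" using mono[of t "s + L"] t su w by auto
      ultimately show "\<exists>y. (h has_real_derivative y) (at t) \<and> y < 0"
        using dh[of t] t su by (intro exI[of _ "sin (\<alpha> t - \<alpha> s)"]) (auto intro: sin_lt_zero)
    qed (use su in auto)
    then show ?thesis using hL by simp
  qed
  then show ?thesis using u' by (simp add: h_def)
qed


definition Dl where "Dl s t = det2 (T s) (T t)"
definition aa where "aa s t = det2 (\<gamma> t - \<gamma> s) (T t) / Dl s t"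
definition bb where "bb s t = det2 (T s) (\<gamma> t - \<gamma> s) / Dl s t"
definition Cc where "Cc s t = T s $ 1 * T t $ 1 + T s $ 2 * T t $ 2"

lemma cramer:
  assumes "Dl s t \<noteq> 0"
  shows "\<gamma> t - \<gamma> s = aa s t *\<^sub>R T s + bb s t *\<^sub>R T t"
proof -
  define D where "D = Dl s t"
  define N where "N = det2 (\<gamma> t - \<gamma> s) (T t)"
  define M where "M = det2 (T s) (\<gamma> t - \<gamma> s)"
  have D0: "D \<noteq> 0" using assms by (simp add: D_def)
  have i1: "N * T s $ 1 + M * T t $ 1 = (\<gamma> t - \<gamma> s) $ 1 * D"
    unfolding N_def M_def D_def Dl_def det2_def by (simp add: algebra_simps)
  have i2: "N * T s $ 2 + M * T t $ 2 = (\<gamma> t - \<gamma> s) $ 2 * D"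
    unfolding N_def M_def D_def Dl_def det2_def by (simp add: algebra_simps)
  have "(\<gamma> t - \<gamma> s) $ 1 = (N / D) * T s $ 1 + (M / D) * T t $ 1"
    using i1 D0 by (simp add: field_simps)
  moreover have "(\<gamma> t - \<gamma> s) $ 2 = (N / D) * T s $ 2 + (M / D) * T t $ 2"
    using i2 D0 by (simp add: field_simps)
  ultimately show ?thesis unfolding veq aa_def bb_def N_def M_def D_def
    by (simp del: vector_minus_component)
qed

lemma coef_unique:
  assumes "Dl s t \<noteq> 0" "\<gamma> t - \<gamma> s = a1 *\<^sub>R T s + b1 *\<^sub>R T t"
  shows "a1 = aa s t \<and> b1 = bb s t"
proof -
  have e1: "(\<gamma> t - \<gamma> s) $ 1 = a1 * T s $ 1 + b1 * T t $ 1"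
   and e2: "(\<gamma> t - \<gamma> s) $ 2 = a1 * T s $ 2 + b1 * T t $ 2" using assms(2) by simp_all
  have "det2 (\<gamma> t - \<gamma> s) (T t) = a1 * Dl s t" "det2 (T s) (\<gamma> t - \<gamma> s) = b1 * Dl s t"
    unfolding det2_def Dl_def e1 e2 by (simp_all add: algebra_simps)
  then show ?thesis using assms(1) by (simp add: aa_def bb_def)
qed

lemma meet_eq:
  assumes "Dl s t \<noteq> 0"
  shows "tangent_meet \<gamma> s t = \<gamma> s + aa s t *\<^sub>R T s"
  unfolding tangent_meet_def tangent_def
proof (rule the_equality)
  show "(\<exists>a. \<gamma> s + aa s t *\<^sub>R T s = \<gamma> s + a *\<^sub>R T s) \<and> (\<exists>b. \<gamma> s + aa s t *\<^sub>R T s = \<gamma> t + b *\<^sub>R T t)"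
  proof
    show "\<exists>b. \<gamma> s + aa s t *\<^sub>R T s = \<gamma> t + b *\<^sub>R T t"
      using cramer[OF assms] by (intro exI[of _ "- bb s t"]) (simp add: algebra_simps)
  qed blast
next
  fix A assume A: "(\<exists>a. A = \<gamma> s + a *\<^sub>R T s) \<and> (\<exists>b. A = \<gamma> t + b *\<^sub>R T t)"
  then obtain a b where ab: "A = \<gamma> s + a *\<^sub>R T s" "A = \<gamma> t + b *\<^sub>R T t" by blast
  then have "\<gamma> t - \<gamma> s = a *\<^sub>R T s + (- b) *\<^sub>R T t" by (simp add: algebra_simps)
  then have "a = aa s t" using coef_unique[OF assms] by blast
  then show "A = \<gamma> s + aa s t *\<^sub>R T s" using ab by simp
qed

lemma H_eq:
  assumes "Dl s t \<noteq> 0"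
  shows "H \<gamma> s t = \<bar>aa s t\<bar> + \<bar>bb s t\<bar>"
proof -
  have "dist (\<gamma> s) (\<gamma> s + aa s t *\<^sub>R T s) = \<bar>aa s t\<bar>" by (simp add: dist_norm normT)
  moreover have "\<gamma> s + aa s t *\<^sub>R T s - \<gamma> t = - (bb s t *\<^sub>R T t)"
    using cramer[OF assms] by (simp add: algebra_simps)
  then have "dist (\<gamma> s + aa s t *\<^sub>R T s) (\<gamma> t) = \<bar>bb s t\<bar>" by (simp add: dist_norm normT)
  ultimately show ?thesis unfolding H_def meet_eq[OF assms] by simp
qed

lemma cfT: "continuous (at z) (\<lambda>w. T (fst w))"
  using continuous_at_compose[OF continuous_fst[OF continuous_ident] isCont_T] by (simp add: comp_def)
lemma csT: "continuous (at z) (\<lambda>w. T (snd w))"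
  using continuous_at_compose[OF continuous_snd[OF continuous_ident] isCont_T] by (simp add: comp_def)
lemma cfg: "continuous (at z) (\<lambda>w. \<gamma> (fst w))"
  using continuous_at_compose[OF continuous_fst[OF continuous_ident] isCont_g] by (simp add: comp_def)
lemma csg: "continuous (at z) (\<lambda>w. \<gamma> (snd w))"
  using continuous_at_compose[OF continuous_snd[OF continuous_ident] isCont_g] by (simp add: comp_def)

lemma cont_Dl: "continuous (at z) (\<lambda>w. Dl (fst w) (snd w))"
  unfolding Dl_def det2_def by (intro continuous_intros cfT csT)
lemma cont_aa: "Dl (fst z) (snd z) \<noteq> 0 \<Longrightarrow> continuous (at z) (\<lambda>w. aa (fst w) (snd w))"
  unfolding aa_def by (intro continuous_intros cont_Dl) (auto simp: det2_def intro!: continuous_intros cfT csT cfg csg)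
lemma cont_bb: "Dl (fst z) (snd z) \<noteq> 0 \<Longrightarrow> continuous (at z) (\<lambda>w. bb (fst w) (snd w))"
  unfolding bb_def by (intro continuous_intros cont_Dl) (auto simp: det2_def intro!: continuous_intros cfT csT cfg csg)

lemma box:
  assumes "Dl x x' > 0" "aa x x' > 0" "bb x x' > 0"
  obtains r where "r > 0" "\<And>s t. \<bar>s - x\<bar> < r \<Longrightarrow> \<bar>t - x'\<bar> < r \<Longrightarrow> Dl s t > 0 \<and> aa s t > 0 \<and> bb s t > 0"
proof -
  define P where "P w = min (Dl (fst w) (snd w)) (min (aa (fst w) (snd w)) (bb (fst w) (snd w)))" for w
  have P0: "P (x, x') > 0" using assms by (simp add: P_def)
  have "continuous (at (x, x')) P" unfolding P_def
    using assms by (intro continuous_intros cont_Dl cont_aa cont_bb) auto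
  then obtain d where d: "d > 0" "\<And>w. dist w (x, x') < d \<Longrightarrow> dist (P w) (P (x, x')) < P (x, x')"
    using P0 unfolding continuous_at_eps_delta by blast
  show ?thesis
  proof (rule that[of "d/2"])
    show "d/2 > 0" using d by simp
    fix s t assume st: "\<bar>s - x\<bar> < d/2" "\<bar>t - x'\<bar> < d/2"
    have "dist (s, t) (x, x') \<le> \<bar>s - x\<bar> + \<bar>t - x'\<bar>"
      unfolding dist_Pair_Pair dist_real_def using sqrt_sum_squares_le_sum_abs[of "\<bar>s - x\<bar>" "\<bar>t - x'\<bar>"] by simp
    then have "dist (P (s, t)) (P (x, x')) < P (x, x')" using st by (intro d(2)) simp
    then have "P (s, t) > 0" by (simp add: dist_real_def)
    then show "Dl s t > 0 \<and> aa s t > 0 \<and> bb s t > 0" by (simp add: P_def)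
  qed
qed

lemma dN_s: "((\<lambda>s. det2 (\<gamma> t - \<gamma> s) (T t)) has_real_derivative - Dl s t) (at s)"
  unfolding det2_def Dl_def vector_minus_component
  by (auto intro!: derivative_eq_intros dg1 dg2 simp: algebra_simps)
lemma dD_s: "((\<lambda>s. Dl s t) has_real_derivative - k s * Cc s t) (at s)"
  unfolding det2_def Dl_def Cc_def
  by (auto intro!: derivative_eq_intros dTx dTy simp: algebra_simps)
lemma dM_s: "((\<lambda>s. det2 (T s) (\<gamma> t - \<gamma> s)) has_real_derivative
    - k s * (T s $ 1 * (\<gamma> t - \<gamma> s) $ 1 + T s $ 2 * (\<gamma> t - \<gamma> s) $ 2)) (at s)"
  unfolding det2_def vector_minus_component
  by (auto intro!: derivative_eq_intros dTx dTy dg1 dg2 simp: algebra_simps)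

lemma dN_t: "((\<lambda>t. det2 (\<gamma> t - \<gamma> s) (T t)) has_real_derivative
    k t * ((\<gamma> t - \<gamma> s) $ 1 * T t $ 1 + (\<gamma> t - \<gamma> s) $ 2 * T t $ 2)) (at t)"
  unfolding det2_def vector_minus_component
  by (auto intro!: derivative_eq_intros dTx dTy dg1 dg2 simp: algebra_simps)
lemma dD_t: "((\<lambda>t. Dl s t) has_real_derivative k t * Cc s t) (at t)"
  unfolding det2_def Dl_def Cc_def
  by (auto intro!: derivative_eq_intros dTx dTy simp: algebra_simps)
lemma dM_t: "((\<lambda>t. det2 (T s) (\<gamma> t - \<gamma> s)) has_real_derivative Dl s t) (at t)"
  unfolding det2_def Dl_def vector_minus_component
  by (auto intro!: derivative_eq_intros dg1 dg2 simp: algebra_simps)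
lemma dC_t: "((\<lambda>t. Cc s t - 1) has_real_derivative - k t * Dl s t) (at t)"
  unfolding det2_def Dl_def Cc_def
  by (auto intro!: derivative_eq_intros dTx dTy simp: algebra_simps)

lemma ds_ab:
  assumes "Dl s t \<noteq> 0"
  shows "((\<lambda>s. aa s t + bb s t) has_real_derivative -1 + k s * (aa s t * (Cc s t - 1) / Dl s t)) (at s)"
proof -
  have "((\<lambda>s. aa s t + bb s t) has_real_derivative
      (- Dl s t * Dl s t - det2 (\<gamma> t - \<gamma> s) (T t) * (- k s * Cc s t)) / (Dl s t * Dl s t)
    + ((- k s * (T s $ 1 * (\<gamma> t - \<gamma> s) $ 1 + T s $ 2 * (\<gamma> t - \<gamma> s) $ 2)) * Dl s t
        - det2 (T s) (\<gamma> t - \<gamma> s) * (- k s * Cc s t)) / (Dl s t * Dl s t)) (at s)"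
    unfolding aa_def bb_def
    by (intro DERIV_add DERIV_divide dN_s dD_s dM_s assms)
  moreover have "(- Dl s t * Dl s t - det2 (\<gamma> t - \<gamma> s) (T t) * (- k s * Cc s t)) / (Dl s t * Dl s t)
    + ((- k s * (T s $ 1 * (\<gamma> t - \<gamma> s) $ 1 + T s $ 2 * (\<gamma> t - \<gamma> s) $ 2)) * Dl s t
        - det2 (T s) (\<gamma> t - \<gamma> s) * (- k s * Cc s t)) / (Dl s t * Dl s t)
    = -1 + k s * ((det2 (\<gamma> t - \<gamma> s) (T t) / Dl s t) * (Cc s t - 1) / Dl s t)"
    by (rule alg_s) (use assms unit[of s] in \<open>auto simp: Dl_def det2_def Cc_def\<close>)
  ultimately show ?thesis by (simp add: aa_def)
qed

lemma dt_ab: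
  assumes "Dl s t \<noteq> 0"
  shows "((\<lambda>t. aa s t + bb s t) has_real_derivative 1 + k t * (bb s t * (1 - Cc s t) / Dl s t)) (at t)"
proof -
  have "((\<lambda>t. aa s t + bb s t) has_real_derivative
      ((k t * ((\<gamma> t - \<gamma> s) $ 1 * T t $ 1 + (\<gamma> t - \<gamma> s) $ 2 * T t $ 2)) * Dl s t
        - det2 (\<gamma> t - \<gamma> s) (T t) * (k t * Cc s t)) / (Dl s t * Dl s t)
    + (Dl s t * Dl s t - det2 (T s) (\<gamma> t - \<gamma> s) * (k t * Cc s t)) / (Dl s t * Dl s t)) (at t)"
    unfolding aa_def bb_def
    by (intro DERIV_add DERIV_divide dN_t dD_t dM_t assms)
  moreover have "((k t * ((\<gamma> t - \<gamma> s) $ 1 * T t $ 1 + (\<gamma> t - \<gamma> s) $ 2 * T t $ 2)) * Dl s t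
        - det2 (\<gamma> t - \<gamma> s) (T t) * (k t * Cc s t)) / (Dl s t * Dl s t)
    + (Dl s t * Dl s t - det2 (T s) (\<gamma> t - \<gamma> s) * (k t * Cc s t)) / (Dl s t * Dl s t)
    = 1 + k t * ((det2 (T s) (\<gamma> t - \<gamma> s) / Dl s t) * (1 - Cc s t) / Dl s t)"
    by (rule alg_t) (use assms unit[of t] in \<open>auto simp: Dl_def det2_def Cc_def\<close>)
  ultimately show ?thesis by (simp add: bb_def)
qed

lemma daa_t:
  assumes "Dl s t \<noteq> 0"
  shows "((\<lambda>t. aa s t) has_real_derivative k t * bb s t / Dl s t) (at t)"
proof -
  have "((\<lambda>t. aa s t) has_real_derivative
      ((k t * ((\<gamma> t - \<gamma> s) $ 1 * T t $ 1 + (\<gamma> t - \<gamma> s) $ 2 * T t $ 2)) * Dl s t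
        - det2 (\<gamma> t - \<gamma> s) (T t) * (k t * Cc s t)) / (Dl s t * Dl s t)) (at t)"
    unfolding aa_def by (intro DERIV_divide dN_t dD_t assms)
  moreover have "((k t * ((\<gamma> t - \<gamma> s) $ 1 * T t $ 1 + (\<gamma> t - \<gamma> s) $ 2 * T t $ 2)) * Dl s t
        - det2 (\<gamma> t - \<gamma> s) (T t) * (k t * Cc s t)) / (Dl s t * Dl s t)
      = k t * (det2 (T s) (\<gamma> t - \<gamma> s) / Dl s t) / Dl s t"
    by (rule alg_at) (use assms unit[of t] in \<open>auto simp: Dl_def det2_def Cc_def\<close>)
  ultimately show ?thesis unfolding bb_def by (rule DERIV_cong)
qed

lemma dmixed:
  assumes "Dl s t \<noteq> 0" "1 + Cc s t \<noteq> 0"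
  shows "((\<lambda>t. -1 + k s * (aa s t * (Cc s t - 1) / Dl s t)) has_real_derivative
           - (k s * k t * (aa s t + bb s t)) / (1 + Cc s t)) (at t)"
proof -
  have h: "((\<lambda>t. -1 + k s * (aa s t * (Cc s t - 1) / Dl s t)) has_real_derivative
      0 + k s * ((((k t * bb s t / Dl s t) * (Cc s t - 1) + aa s t * (- k t * Dl s t)) * Dl s t
        - aa s t * (Cc s t - 1) * (k t * Cc s t)) / (Dl s t * Dl s t))) (at t)"
  proof -
    have m: "((\<lambda>t. aa s t * (Cc s t - 1)) has_real_derivative
        (k t * bb s t / Dl s t) * (Cc s t - 1) + aa s t * (- k t * Dl s t)) (at t)"
      using DERIV_mult'[OF daa_t[OF assms(1)] dC_t[of s t]] by (rule DERIV_cong) (rule add.commute)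
    show ?thesis by (intro DERIV_add DERIV_const DERIV_cmult DERIV_divide m dD_t assms)
  qed
  have dc: "(Dl s t)^2 + (Cc s t)^2 = 1"
    using lagrange2[of "T s $ 1" "T t $ 2" "T s $ 2" "T t $ 1"] unit[of s] unit[of t]
    by (simp add: Dl_def det2_def Cc_def algebra_simps)
  have "k s * ((((k t * bb s t / Dl s t) * (Cc s t - 1) + aa s t * (- k t * Dl s t)) * Dl s t
        - aa s t * (Cc s t - 1) * (k t * Cc s t)) / (Dl s t * Dl s t))
      = - (k s * k t * (aa s t + bb s t)) / (1 + Cc s t)"
    by (rule alg_mixed[OF assms(1) dc assms(2)])
  then show ?thesis using h by simp
qed


lemma DlCc: "(Dl s t)^2 + (Cc s t)^2 = 1"
  using lagrange2[of "T s $ 1" "T t $ 2" "T s $ 2" "T t $ 1"] unit[of s] unit[of t]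
  by (simp add: Dl_def det2_def Cc_def algebra_simps)

lemma main:
  assumes neg: "is_neg_tangency \<gamma> A x" and pos: "is_pos_tangency \<gamma> A x'"
  defines "\<phi> \<equiv> vangle (\<gamma> x - A) (\<gamma> x' - A)"
  shows "((\<lambda>t. H \<gamma> t x') has_real_derivative
            (- curvature \<gamma> x * dist A (\<gamma> x) * cot (\<phi> / 2) - 1)) (at x) \<and>
         ((\<lambda>t. H \<gamma> x t) has_real_derivative
            (curvature \<gamma> x' * dist A (\<gamma> x') * cot (\<phi> / 2) + 1)) (at x') \<and>
         ((\<lambda>t. deriv (\<lambda>s. H \<gamma> s t) x) has_real_derivative
            (- (curvature \<gamma> x * curvature \<gamma> x' * (dist A (\<gamma> x) + dist A (\<gamma> x')))
               / (2 * (sin (\<phi> / 2))\<^sup>2))) (at x')"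
proof -
  obtain c1 where c1: "c1 > 0" "A - \<gamma> x = c1 *\<^sub>R T x"
    using neg unfolding is_neg_tangency_def tangent_def by blast
  obtain c2 where c2: "c2 > 0" "\<gamma> x' - A = c2 *\<^sub>R T x'"
    using pos unfolding is_pos_tangency_def tangent_def by blast
  have d: "\<gamma> x' - \<gamma> x = c1 *\<^sub>R T x + c2 *\<^sub>R T x'"
  proof -
    have "\<gamma> x' - \<gamma> x = (\<gamma> x' - A) + (A - \<gamma> x)" by simp
    then show ?thesis using c1 c2 by simp
  qed
  define D where "D = Dl x x'"
  define C where "C = Cc x x'"
  have Dpos: "D > 0"
  proof (cases "\<gamma> x' = \<gamma> x")
    case True
    then obtain n :: int where n: "x' = x + of_int n * L" using same_point by blast
    have "T x' = T x" unfolding n by (rule periodic_int[of "vderiv \<gamma>", OF perT])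
    then have "(c1 + c2) *\<^sub>R T x = 0" using d True by (simp add: scaleR_add_left)
    then show ?thesis using c1 c2 Tnz[of x] by simp
  next
    case False
    then have "det2 (T x) (\<gamma> x' - \<gamma> x) > 0" by (rule support)
    moreover have "det2 (T x) (\<gamma> x' - \<gamma> x) = c2 * D"
      unfolding d D_def Dl_def det2_def by (simp add: algebra_simps)
    ultimately show ?thesis using c2 by (simp add: zero_less_mult_iff)
  qed
  have D0: "Dl x x' \<noteq> 0" using Dpos by (simp add: D_def)
  have coef: "c1 = aa x x' \<and> c2 = bb x x'" by (rule coef_unique[OF D0 d])
  obtain r where r: "r > 0" "\<And>s t. \<bar>s - x\<bar> < r \<Longrightarrow> \<bar>t - x'\<bar> < r \<Longrightarrow> Dl s t > 0 \<and> aa s t > 0 \<and> bb s t > 0"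
    using box[of x x'] Dpos coef c1 c2 unfolding D_def by auto
  have Heq: "H \<gamma> s t = aa s t + bb s t" if "\<bar>s - x\<bar> < r" "\<bar>t - x'\<bar> < r" for s t
    using r(2)[OF that] H_eq[of s t] by auto
  have dc: "D^2 + C^2 = 1" unfolding D_def C_def by (rule DlCc)
  have "D^2 > 0" using Dpos by simp
  then have C2: "C^2 < 1" using dc by linarith
  then have Cb: "-1 < C" "C < 1" using abs_square_less_1[of C] by auto
  have dA1: "dist A (\<gamma> x) = c1" using c1 by (simp add: dist_norm normT)
  have dA2: "dist A (\<gamma> x') = c2"
  proof -
    have "A - \<gamma> x' = - (c2 *\<^sub>R T x')" using c2 by (simp add: algebra_simps)
    then show ?thesis using c2 by (simp add: dist_norm normT)
  qed
  have "\<phi> = arccos (- C)"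
  proof -
    have e1: "\<gamma> x - A = (- c1) *\<^sub>R T x" using c1 by (simp add: algebra_simps)
    have "(\<gamma> x - A) \<bullet> (\<gamma> x' - A) = - c1 * c2 * C"
      unfolding e1 c2(2) C_def Cc_def i2 by (simp add: algebra_simps)
    moreover have "norm (\<gamma> x - A) = c1" "norm (\<gamma> x' - A) = c2"
      using c1 c2 unfolding e1 c2(2) by (simp_all add: normT)
    ultimately show ?thesis using c1 c2 unfolding \<phi>_def vangle_def by simp
  qed
  then have cot: "cot (\<phi> / 2) = (1 - C) / D" and sin2: "2 * (sin (\<phi> / 2))^2 = 1 + C"
    using half_angle[OF Cb Dpos dc] by simp_all
  have ball1: "s \<in> ball x r \<Longrightarrow> \<bar>s - x\<bar> < r" for s by (simp add: dist_real_def abs_minus_commute)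
  have ball2: "t \<in> ball x' r \<Longrightarrow> \<bar>t - x'\<bar> < r" for t by (simp add: dist_real_def abs_minus_commute)
  have "((\<lambda>t. H \<gamma> t x') has_real_derivative -1 + k x * (aa x x' * (Cc x x' - 1) / Dl x x')) (at x)"
  proof (rule has_field_derivative_transform_within_open[OF ds_ab[OF D0], of "ball x r"])
    fix s assume "s \<in> ball x r"
    then show "aa s x' + bb s x' = H \<gamma> s x'" using Heq[of s x'] ball1 r by simp
  qed (use r in auto)
  moreover have "-1 + k x * (aa x x' * (Cc x x' - 1) / Dl x x') = - k x * dist A (\<gamma> x) * cot (\<phi> / 2) - 1"
    unfolding cot dA1 using coef Dpos by (simp add: D_def C_def field_simps)
  ultimately have P1: "((\<lambda>t. H \<gamma> t x') has_real_derivative (- k x * dist A (\<gamma> x) * cot (\<phi> / 2) - 1)) (at x)"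
    by (rule DERIV_cong)
  have "((\<lambda>t. H \<gamma> x t) has_real_derivative 1 + k x' * (bb x x' * (1 - Cc x x') / Dl x x')) (at x')"
  proof (rule has_field_derivative_transform_within_open[OF dt_ab[OF D0], of "ball x' r"])
    fix t assume "t \<in> ball x' r"
    then show "aa x t + bb x t = H \<gamma> x t" using Heq[of x t] ball2 r by simp
  qed (use r in auto)
  moreover have "1 + k x' * (bb x x' * (1 - Cc x x') / Dl x x') = k x' * dist A (\<gamma> x') * cot (\<phi> / 2) + 1"
    unfolding cot dA2 using coef Dpos by (simp add: D_def C_def field_simps)
  ultimately have P2: "((\<lambda>t. H \<gamma> x t) has_real_derivative (k x' * dist A (\<gamma> x') * cot (\<phi> / 2) + 1)) (at x')"
    by (rule DERIV_cong)
  have dv: "deriv (\<lambda>s. H \<gamma> s t) x = -1 + k x * (aa x t * (Cc x t - 1) / Dl x t)" if t: "t \<in> ball x' r" for t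
  proof -
    have Dt: "Dl x t \<noteq> 0" using r(2)[of x t] ball2[OF t] r(1) by auto
    have "((\<lambda>s. H \<gamma> s t) has_real_derivative -1 + k x * (aa x t * (Cc x t - 1) / Dl x t)) (at x)"
    proof (rule has_field_derivative_transform_within_open[OF ds_ab[OF Dt], of "ball x r"])
      fix s assume "s \<in> ball x r"
      then show "aa s t + bb s t = H \<gamma> s t" using Heq[of s t] ball1 ball2[OF t] by simp
    qed (use r in auto)
    then show ?thesis by (rule DERIV_imp_deriv)
  qed
  have C1: "1 + Cc x x' \<noteq> 0" using Cb by (simp add: C_def)
  have "((\<lambda>t. deriv (\<lambda>s. H \<gamma> s t) x) has_real_derivative - (k x * k x' * (aa x x' + bb x x')) / (1 + Cc x x')) (at x')"
  proof (rule has_field_derivative_transform_within_open[OF dmixed[OF D0 C1], of "ball x' r"])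
    fix t assume "t \<in> ball x' r"
    then show "-1 + k x * (aa x t * (Cc x t - 1) / Dl x t) = deriv (\<lambda>s. H \<gamma> s t) x" using dv by simp
  qed (use r in auto)
  moreover have "- (k x * k x' * (aa x x' + bb x x')) / (1 + Cc x x')
      = - (k x * k x' * (dist A (\<gamma> x) + dist A (\<gamma> x'))) / (2 * (sin (\<phi> / 2))\<^sup>2)"
    unfolding sin2 dA1 dA2 using coef by (simp add: C_def)
  ultimately have P3: "((\<lambda>t. deriv (\<lambda>s. H \<gamma> s t) x) has_real_derivative
      - (k x * k x' * (dist A (\<gamma> x) + dist A (\<gamma> x'))) / (2 * (sin (\<phi> / 2))\<^sup>2)) (at x')"
    by (rule DERIV_cong)
  show ?thesis using P1 P2 P3 by blast
qed

end

theorem lemma2p1: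
  fixes \<gamma> :: "real \<Rightarrow> real^2" and L x x' :: real and A :: "real^2"
  assumes oval: "arclength_oval \<gamma> L"
    and ext: "A \<notin> oval_domain \<gamma>"
    and meet: "A = tangent_meet \<gamma> x x'"
    and neg: "is_neg_tangency \<gamma> A x"
    and pos: "is_pos_tangency \<gamma> A x'"
  defines "\<phi> \<equiv> vangle (\<gamma> x - A) (\<gamma> x' - A)"
  shows "((\<lambda>t. H \<gamma> t x') has_real_derivative
            (- curvature \<gamma> x * dist A (\<gamma> x) * cot (\<phi> / 2) - 1)) (at x) \<and>
         ((\<lambda>t. H \<gamma> x t) has_real_derivative
            (curvature \<gamma> x' * dist A (\<gamma> x') * cot (\<phi> / 2) + 1)) (at x') \<and>
         ((\<lambda>t. deriv (\<lambda>s. H \<gamma> s t) x) has_real_derivative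
            (- (curvature \<gamma> x * curvature \<gamma> x' * (dist A (\<gamma> x) + dist A (\<gamma> x')))
               / (2 * (sin (\<phi> / 2))\<^sup>2))) (at x')"
proof -
  interpret oval_ctx \<gamma> L by (unfold_locales) (rule oval)
  show ?thesis unfolding \<phi>_def by (rule main[OF neg pos])
qed

end
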